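(* Let $\alpha\in(0,1)$ and $n\ge1$. For every configuration $w\in\mathcal{W}_{2n}$, $$(1+n)^\alpha\le\phi_\alpha(w)\le(2n)^{\alpha+1},$$ and the lower bound is attained if and only if $E(w)=0$.
   Context: A configuration of length $m$ is a word $w=w_1\cdots w_m$ over $\{1,2\}$ with $|w|_1=|w|_2$; $\mathcal{W}_m$ is the set of such words. $E(w)$ is the number of indices $i$ with $w_i=w_{i+1}$ (mismatches). Dyck factors: write $w=p\cdot v\cdot s$ with $v=v_1\cdots v_k$ a nonempty factor (occurring at a given position). $v$ is a positive Dyck factor of height $|p|_1-|p|_2$ if $|v|_1=|v|_2$, $|v_1\cdots v_i|_1\ge|v_1\cdots v_i|_2$ for all $1\le i\le k$, and $|p|_1-|p|_2\ge0$. A negative Dyck factor is defined by exchanging the letters $1$ and $2$ in these three conditions. A Dyck factor is maximal if no Dyck factor with the same height contains it. For $\alpha\in(0,1)$, $\phi_\alpha(w)=\sum_{v\in\mathrm{DF}(w)}(1+|v|_1)^\alpha$, where $\mathrm{DF}(w)$ is the set of (occurrences of) maximal Dyck factors of $w$. *)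

theory Defs
  imports Complex_Main
begin

text \<open>Words over {1,2} are lists of naturals. Positions are 0-indexed.
  An occurrence of a factor is a pair (i,k): it starts after the prefix
  p = take i w and is v = take k (drop i w).\<close>

definition cnt :: "nat \<Rightarrow> nat list \<Rightarrow> nat" where
  "cnt a xs = length (filter (\<lambda>x. x = a) xs)"

definition configs :: "nat \<Rightarrow> nat list set" where
  "configs m = {w. set w \<subseteq> {1,2} \<and> length w = m \<and> cnt 1 w = cnt 2 w}"

definition mismatches :: "nat list \<Rightarrow> nat" where
  "mismatches w = card {i. i + 1 < length w \<and> w ! i = w ! (i + 1)}"

definition factor :: "nat list \<Rightarrow> nat \<Rightarrow> nat \<Rightarrow> nat list" where
  "factor w i k = take k (drop i w)"

definition height :: "nat list \<Rightarrow> nat \<Rightarrow> int" where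
  "height w i = int (cnt 1 (take i w)) - int (cnt 2 (take i w))"

definition pos_dyck_factor :: "nat list \<Rightarrow> nat \<Rightarrow> nat \<Rightarrow> bool" where
  "pos_dyck_factor w i k \<longleftrightarrow> 1 \<le> k \<and> i + k \<le> length w \<and>
     cnt 1 (factor w i k) = cnt 2 (factor w i k) \<and>
     (\<forall>j\<in>{1..k}. cnt 1 (take j (factor w i k)) \<ge> cnt 2 (take j (factor w i k))) \<and>
     cnt 1 (take i w) \<ge> cnt 2 (take i w)"

definition neg_dyck_factor :: "nat list \<Rightarrow> nat \<Rightarrow> nat \<Rightarrow> bool" where
  "neg_dyck_factor w i k \<longleftrightarrow> 1 \<le> k \<and> i + k \<le> length w \<and>
     cnt 2 (factor w i k) = cnt 1 (factor w i k) \<and>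
     (\<forall>j\<in>{1..k}. cnt 2 (take j (factor w i k)) \<ge> cnt 1 (take j (factor w i k))) \<and>
     cnt 2 (take i w) \<ge> cnt 1 (take i w)"

definition dyck_factor :: "nat list \<Rightarrow> nat \<Rightarrow> nat \<Rightarrow> bool" where
  "dyck_factor w i k \<longleftrightarrow> pos_dyck_factor w i k \<or> neg_dyck_factor w i k"

definition maximal_dyck_factor :: "nat list \<Rightarrow> nat \<Rightarrow> nat \<Rightarrow> bool" where
  "maximal_dyck_factor w i k \<longleftrightarrow> dyck_factor w i k \<and>
     \<not> (\<exists>i' k'. dyck_factor w i' k' \<and> height w i' = height w i \<and>
            i' \<le> i \<and> i + k \<le> i' + k' \<and> (i', k') \<noteq> (i, k))"

definition DF :: "nat list \<Rightarrow> (nat \<times> nat) set" where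
  "DF w = {(i, k). maximal_dyck_factor w i k}"

definition phi :: "real \<Rightarrow> nat list \<Rightarrow> real" where
  "phi \<alpha> w = (\<Sum>(i, k)\<in>DF w. (1 + real (cnt 1 (factor w i k))) powr \<alpha>)"

end

theory Submission
  imports Defs
begin


lemma cnt_append[simp]: "cnt a (xs @ ys) = cnt a xs + cnt a ys"
  by (simp add: cnt_def)

lemma cnt12: "set xs \<subseteq> {1,2} \<Longrightarrow> cnt 1 xs + cnt 2 xs = length xs"
  by (induction xs) (auto simp: cnt_def)

lemma height_0[simp]: "height w 0 = 0"
  by (simp add: height_def cnt_def)

lemma height_step: "m < length w \<Longrightarrow> height w (Suc m) = height w m +
   (if w!m = 1 then 1 else if w!m = 2 then -1 else 0)"
  by (simp add: height_def take_Suc_conv_app_nth cnt_def)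

lemma height_step1: "m < length w \<Longrightarrow> w!m = 1 \<Longrightarrow> height w (Suc m) = height w m + 1"
  by (simp add: height_step)
lemma height_step2: "m < length w \<Longrightarrow> w!m = 2 \<Longrightarrow> height w (Suc m) = height w m - 1"
  by (simp add: height_step)

lemma height_step12: "set w \<subseteq> {1,2} \<Longrightarrow> m < length w \<Longrightarrow>
   height w (Suc m) = height w m + 1 \<or> height w (Suc m) = height w m - 1"
proof -
  assume a: "set w \<subseteq> {1,2}" "m < length w"
  hence "w!m \<in> {1,2}" using nth_mem by blast
  thus ?thesis using a height_step1 height_step2 by auto
qed

lemma cnt_take_le: "cnt a (take k xs) \<le> cnt a xs"
proof -
  have "cnt a xs = cnt a (take k xs) + cnt a (drop k xs)"
    by (metis append_take_drop_id cnt_append)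
  thus ?thesis by simp
qed

lemma cnt_drop_le: "cnt a (drop k xs) \<le> cnt a xs"
proof -
  have "cnt a xs = cnt a (take k xs) + cnt a (drop k xs)"
    by (metis append_take_drop_id cnt_append)
  thus ?thesis by simp
qed

lemma cnt_factor_le: "cnt a (factor w i k) \<le> cnt a w"
  unfolding factor_def using cnt_take_le cnt_drop_le le_trans by blast

lemma cnt_take_factor: "t \<le> k \<Longrightarrow>
  cnt a (take (i+t) w) = cnt a (take i w) + cnt a (take t (factor w i k))"
  by (simp add: factor_def take_add min_absorb1)

lemma factor_take: "take k (factor w i k) = factor w i k"
  by (simp add: factor_def)

lemma pos_iff: "pos_dyck_factor w i k \<longleftrightarrow> 1 \<le> k \<and> i+k \<le> length w \<and>
   height w (i+k) = height w i \<and> (\<forall>t\<in>{1..k}. height w (i+t) \<ge> height w i) \<and> height w i \<ge> 0"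
proof -
  have e: "height w (i+t) - height w i = int (cnt 1 (take t (factor w i k))) - int (cnt 2 (take t (factor w i k)))"
    if "t \<le> k" for t
    using cnt_take_factor[OF that, of 1 i w] cnt_take_factor[OF that, of 2 i w]
    by (simp add: height_def)
  have ek: "height w (i+k) - height w i = int (cnt 1 (factor w i k)) - int (cnt 2 (factor w i k))"
    using e[of k] factor_take[of k w i] by simp
  have b: "(cnt 2 (take t (factor w i k)) \<le> cnt 1 (take t (factor w i k))) \<longleftrightarrow> height w i \<le> height w (i+t)"
    if "t \<in> {1..k}" for t using e[of t] that by auto
  have c: "(cnt 1 (factor w i k) = cnt 2 (factor w i k)) \<longleftrightarrow> height w (i+k) = height w i"
    using ek by auto
  have d: "(cnt 2 (take i w) \<le> cnt 1 (take i w)) \<longleftrightarrow> 0 \<le> height w i"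
    by (auto simp: height_def)
  show ?thesis unfolding pos_dyck_factor_def using b c d by (metis (no_types, lifting))
qed

lemma neg_iff: "neg_dyck_factor w i k \<longleftrightarrow> 1 \<le> k \<and> i+k \<le> length w \<and>
   height w (i+k) = height w i \<and> (\<forall>t\<in>{1..k}. height w (i+t) \<le> height w i) \<and> height w i \<le> 0"
proof -
  have e: "height w (i+t) - height w i = int (cnt 1 (take t (factor w i k))) - int (cnt 2 (take t (factor w i k)))"
    if "t \<le> k" for t
    using cnt_take_factor[OF that, of 1 i w] cnt_take_factor[OF that, of 2 i w]
    by (simp add: height_def)
  have ek: "height w (i+k) - height w i = int (cnt 1 (factor w i k)) - int (cnt 2 (factor w i k))"
    using e[of k] factor_take[of k w i] by simp
  have b: "(cnt 1 (take t (factor w i k)) \<le> cnt 2 (take t (factor w i k))) \<longleftrightarrow> height w (i+t) \<le> height w i"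
    if "t \<in> {1..k}" for t using e[of t] that by auto
  have c: "(cnt 2 (factor w i k) = cnt 1 (factor w i k)) \<longleftrightarrow> height w (i+k) = height w i"
    using ek by auto
  have d: "(cnt 1 (take i w) \<le> cnt 2 (take i w)) \<longleftrightarrow> height w i \<le> 0"
    by (auto simp: height_def)
  show ?thesis unfolding neg_dyck_factor_def using b c d by (metis (no_types, lifting))
qed


lemma pos_start:
  assumes sw: "set w \<subseteq> {1,2}" and h0: "height w i \<ge> 0"
    and up: "height w (Suc i) = height w i + 1"
    and m: "i < m" "m \<le> length w" "height w m \<le> height w i"
  shows "\<exists>l. i < l \<and> l \<le> length w \<and> pos_dyck_factor w i (l - i)"
proof -
  define P where "P j \<longleftrightarrow> i < j \<and> j \<le> length w \<and> height w j \<le> height w i" for j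
  have "P m" using m by (simp add: P_def)
  then obtain l where l: "P l" "\<And>j. j < l \<Longrightarrow> \<not> P j"
    by (metis exists_least_iff)
  have bet: "height w j > height w i" if "i < j" "j < l" for j
    using l(2)[OF that(2)] l(1) that by (auto simp: P_def)
  have "l \<noteq> Suc i" using l(1) up by (auto simp: P_def)
  hence l2: "Suc i < l" using l(1) by (auto simp: P_def)
  then obtain q where q: "l = Suc q" "i < q" by (cases l) auto
  have "q < length w" using l(1) q by (auto simp: P_def)
  from height_step12[OF sw this] have "height w l \<ge> height w q - 1" using q by auto
  moreover have "height w q > height w i" using bet q by auto
  ultimately have hl: "height w l = height w i" using l(1) by (auto simp: P_def)
  have "pos_dyck_factor w i (l - i)"
    unfolding pos_iff
  proof (intro conjI ballI)
    show "1 \<le> l - i" using l2 by simp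
    show "i + (l - i) \<le> length w" using l(1) by (auto simp: P_def)
    show "height w (i + (l - i)) = height w i" using hl l2 by simp
    show "0 \<le> height w i" by fact
    fix t assume "t \<in> {1..l-i}"
    hence "i < i + t" "i + t \<le> l" by auto
    thus "height w i \<le> height w (i + t)"
      using bet[of "i+t"] hl by (cases "i + t = l") auto
  qed
  thus ?thesis using l(1) by (auto simp: P_def)
qed

lemma neg_start:
  assumes sw: "set w \<subseteq> {1,2}" and h0: "height w i \<le> 0"
    and up: "height w (Suc i) = height w i - 1"
    and m: "i < m" "m \<le> length w" "height w m \<ge> height w i"
  shows "\<exists>l. i < l \<and> l \<le> length w \<and> neg_dyck_factor w i (l - i)"
proof -
  define P where "P j \<longleftrightarrow> i < j \<and> j \<le> length w \<and> height w j \<ge> height w i" for j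
  have "P m" using m by (simp add: P_def)
  then obtain l where l: "P l" "\<And>j. j < l \<Longrightarrow> \<not> P j"
    by (metis exists_least_iff)
  have bet: "height w j < height w i" if "i < j" "j < l" for j
    using l(2)[OF that(2)] l(1) that by (auto simp: P_def)
  have "l \<noteq> Suc i" using l(1) up by (auto simp: P_def)
  hence l2: "Suc i < l" using l(1) by (auto simp: P_def)
  then obtain q where q: "l = Suc q" "i < q" by (cases l) auto
  have "q < length w" using l(1) q by (auto simp: P_def)
  from height_step12[OF sw this] have "height w l \<le> height w q + 1" using q by auto
  moreover have "height w q < height w i" using bet q by auto
  ultimately have hl: "height w l = height w i" using l(1) by (auto simp: P_def)
  have "neg_dyck_factor w i (l - i)"
    unfolding neg_iff
  proof (intro conjI ballI)
    show "1 \<le> l - i" using l2 by simp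
    show "i + (l - i) \<le> length w" using l(1) by (auto simp: P_def)
    show "height w (i + (l - i)) = height w i" using hl l2 by simp
    show "height w i \<le> 0" by fact
    fix t assume "t \<in> {1..l-i}"
    hence "i < i + t" "i + t \<le> l" by auto
    thus "height w (i + t) \<le> height w i"
      using bet[of "i+t"] hl by (cases "i + t = l") auto
  qed
  thus ?thesis using l(1) by (auto simp: P_def)
qed

lemma dyck_bound: "dyck_factor w i k \<Longrightarrow> i + k \<le> length w \<and> 1 \<le> k"
  by (auto simp: dyck_factor_def pos_dyck_factor_def neg_dyck_factor_def)

lemma max_ext:
  assumes "dyck_factor w i k"
  shows "\<exists>i' k'. maximal_dyck_factor w i' k' \<and> height w i' = height w i \<and> i' \<le> i \<and> i + k \<le> i' + k'"
proof -
  define P where "P = (\<lambda>(a,b). dyck_factor w a b \<and> height w a = height w i \<and> a \<le> i \<and> i+k \<le> a+b)"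
  have "P (i,k)" using assms by (simp add: P_def)
  moreover have "\<forall>y. P y \<longrightarrow> snd y < Suc (length w)"
  proof (intro allI impI)
    fix y assume "P y"
    then obtain a b where "y = (a,b)" "dyck_factor w a b" by (auto simp: P_def)
    thus "snd y < Suc (length w)" using dyck_bound[of w a b] by simp
  qed
  ultimately obtain x where x: "P x" "\<forall>y. P y \<longrightarrow> snd y \<le> snd x"
    using ex_has_greatest_nat[of P "(i,k)" snd "Suc (length w)"] by blast
  obtain a b where ab: "x = (a,b)" by (cases x)
  have "maximal_dyck_factor w a b"
    unfolding maximal_dyck_factor_def
  proof (intro conjI notI)
    show "dyck_factor w a b" using x ab by (simp add: P_def)
    assume "\<exists>i' k'. dyck_factor w i' k' \<and> height w i' = height w a \<and> i' \<le> a \<and> a + b \<le> i' + k' \<and> (i', k') \<noteq> (a, b)"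
    then obtain i' k' where c: "dyck_factor w i' k'" "height w i' = height w a" "i' \<le> a" "a + b \<le> i' + k'" "(i', k') \<noteq> (a, b)"
      by blast
    have "P (i',k')" using c x ab by (auto simp: P_def)
    hence "k' \<le> b" using x ab by force
    thus False using c by auto
  qed
  thus ?thesis using x ab by (auto simp: P_def)
qed

lemma cnt_take_card: "m \<le> length w \<Longrightarrow> cnt a (take m w) = card {p. p < m \<and> w!p = a}"
  unfolding cnt_def length_filter_conv_card
  by (rule arg_cong[where f=card]) auto

lemma cnt_factor_card:
  assumes "i + k \<le> length w"
  shows "cnt a (factor w i k) = card {p. i \<le> p \<and> p < i+k \<and> w!p = a}"
proof -
  have e: "cnt a (take (i+k) w) = cnt a (take i w) + cnt a (factor w i k)"
    using cnt_take_factor[of k k a i w] factor_take[of k w i] by simp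
  have u: "{p. p < i+k \<and> w!p = a} = {p. p < i \<and> w!p = a} \<union> {p. i \<le> p \<and> p < i+k \<and> w!p = a}"
    by auto
  have "card {p. p < i+k \<and> w!p = a} = card {p. p < i \<and> w!p = a} + card {p. i \<le> p \<and> p < i+k \<and> w!p = a}"
    unfolding u by (rule card_Un_disjoint) auto
  thus ?thesis using e cnt_take_card[of "i+k" w a] cnt_take_card[of i w a] assms by simp
qed


lemma config_facts:
  assumes "w \<in> configs (2*n)"
  shows "set w \<subseteq> {1,2}" "length w = 2*n" "cnt 1 w = n" "cnt 2 w = n" "height w (2*n) = 0"
proof -
  show s: "set w \<subseteq> {1,2}" "length w = 2*n" using assms by (auto simp: configs_def)
  have e: "cnt 1 w = cnt 2 w" using assms by (auto simp: configs_def)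
  from cnt12[OF s(1)] e s(2) show "cnt 1 w = n" "cnt 2 w = n" by auto
  show "height w (2*n) = 0" using e s(2) by (simp add: height_def)
qed

lemma DF_bound: "(i,k) \<in> DF w \<Longrightarrow> i + k \<le> length w \<and> 1 \<le> k \<and> dyck_factor w i k"
  using dyck_bound by (auto simp: DF_def maximal_dyck_factor_def)

lemma DF_finite: "finite (DF w)"
proof -
  have "DF w \<subseteq> {0..length w} \<times> {0..length w}"
    using DF_bound by fastforce
  thus ?thesis by (rule finite_subset) auto
qed

lemma max_nc: "maximal_dyck_factor w i k \<Longrightarrow> dyck_factor w i' k' \<Longrightarrow> height w i' = height w i
  \<Longrightarrow> i' \<le> i \<Longrightarrow> i+k \<le> i'+k' \<Longrightarrow> (i',k') = (i,k)"
  unfolding maximal_dyck_factor_def by blast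

lemma DF_inj: "inj_on fst (DF w)"
proof (rule inj_onI)
  fix x y assume xy: "x \<in> DF w" "y \<in> DF w" "fst x = fst y"
  obtain i k where x: "x = (i,k)" by (cases x)
  obtain k' where y: "y = (i,k')" using xy x by (cases y) auto
  have m1: "maximal_dyck_factor w i k" "maximal_dyck_factor w i k'"
    using xy x y by (auto simp: DF_def)
  show "x = y"
  proof (rule ccontr)
    assume ne: "x \<noteq> y"
    hence "k \<noteq> k'" using x y by simp
    have d: "dyck_factor w i k" "dyck_factor w i k'" using m1 by (simp_all add: maximal_dyck_factor_def)
    show False
    proof (cases "k < k'")
      case True thus False using max_nc[OF m1(1) d(2)] by simp
    next
      case False thus False using max_nc[OF m1(2) d(1)] \<open>k \<noteq> k'\<close> by simp
    qed
  qed
qed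

lemma DF_card: "card (DF w) \<le> length w"
proof -
  have "card (DF w) = card (fst ` DF w)" using card_image[OF DF_inj] by simp
  also have "\<dots> \<le> card {0..<length w}"
  proof (rule card_mono)
    show "fst ` DF w \<subseteq> {0..<length w}"
    proof
      fix a assume "a \<in> fst ` DF w"
      then obtain b where "(a,b) \<in> DF w" by force
      thus "a \<in> {0..<length w}" using DF_bound[of a b w] by simp
    qed
  qed auto
  finally show ?thesis by simp
qed

lemma cover:
  assumes c: "w \<in> configs (2*n)" and p: "p < 2*n"
  shows "\<exists>i k. (i,k) \<in> DF w \<and> height w i = 0 \<and> i \<le> p \<and> p < i + k"
proof -
  note cf = config_facts[OF c]
  define P where "P m \<longleftrightarrow> m \<le> p \<and> height w m = 0" for m
  have "P 0" by (simp add: P_def)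
  moreover have "\<forall>y. P y \<longrightarrow> id y < Suc p" by (auto simp: P_def)
  ultimately obtain j where j: "P j" "\<forall>y. P y \<longrightarrow> id y \<le> id j"
    using ex_has_greatest_nat[of P 0 id "Suc p"] by blast
  have jl: "j < length w" using j cf p by (auto simp: P_def)
  have hj: "height w j = 0" using j by (simp add: P_def)
  have "w!j \<in> {1,2}" using jl cf(1) nth_mem by blast
  hence "\<exists>l. j < l \<and> l \<le> length w \<and> dyck_factor w j (l - j)"
  proof
    assume a: "w!j = 1"
    have "\<exists>l. j < l \<and> l \<le> length w \<and> pos_dyck_factor w j (l - j)"
      by (rule pos_start[OF cf(1), of j "2*n"]) (use hj height_step1[OF jl a] jl cf in auto)
    thus ?thesis by (auto simp: dyck_factor_def)
  next
    assume "w!j \<in> {2}" hence a: "w!j = 2" by simp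
    have "\<exists>l. j < l \<and> l \<le> length w \<and> neg_dyck_factor w j (l - j)"
      by (rule neg_start[OF cf(1), of j "2*n"]) (use hj height_step2[OF jl a] jl cf in auto)
    thus ?thesis by (auto simp: dyck_factor_def)
  qed
  then obtain l where l: "j < l" "l \<le> length w" "dyck_factor w j (l - j)" by blast
  have "height w l = 0"
    using l hj by (auto simp: dyck_factor_def pos_iff neg_iff)
  hence "p < l" using j l(1) unfolding P_def by (metis id_apply not_le_imp_less not_less)
  obtain i' k' where m: "maximal_dyck_factor w i' k'" "height w i' = height w j" "i' \<le> j" "j + (l - j) \<le> i' + k'"
    using max_ext[OF l(3)] by blast
  have "(i',k') \<in> DF w" using m(1) by (simp add: DF_def)
  moreover have "height w i' = 0" using m(2) hj by simp
  moreover have "i' \<le> p" using m(3) j(1) by (simp add: P_def)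
  moreover have "p < i' + k'" using m(4) l(1) \<open>p < l\<close> by simp
  ultimately show ?thesis by blast
qed

lemma subadd:
  fixes x y a :: real
  assumes "0 < a" "a < 1" "0 < x" "0 < y"
  shows "(x+y) powr a \<le> x powr a + y powr a"
proof -
  have ex: "x powr a = x * x powr (a-1)" using powr_mult_base[of x "a-1"] assms by simp
  have ey: "y powr a = y * y powr (a-1)" using powr_mult_base[of y "a-1"] assms by simp
  have exy: "(x+y) powr a = (x+y) * (x+y) powr (a-1)" using powr_mult_base[of "x+y" "a-1"] assms by simp
  have "x powr (a-1) \<ge> (x+y) powr (a-1)" by (rule powr_mono2') (use assms in auto)
  hence 1: "x powr a \<ge> x * (x+y) powr (a-1)" unfolding ex using assms by (simp add: mult_left_mono)
  have "y powr (a-1) \<ge> (x+y) powr (a-1)" by (rule powr_mono2') (use assms in auto)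
  hence 2: "y powr a \<ge> y * (x+y) powr (a-1)" unfolding ey using assms by (simp add: mult_left_mono)
  show ?thesis using 1 2 exy by (simp add: distrib_right)
qed

lemma sum_powr:
  fixes g :: "'a \<Rightarrow> real"
  assumes a: "0 < a" "a < 1" and "finite S" "S \<noteq> {}" "\<forall>s\<in>S. g s \<ge> 0"
  shows "(1 + sum g S) powr a \<le> (\<Sum>s\<in>S. (1 + g s) powr a)"
  using assms(3-)
proof (induction S rule: finite_ne_induct)
  case (singleton x) thus ?case by simp
next
  case (insert x F)
  have F0: "sum g F \<ge> 0" using insert by (simp add: sum_nonneg)
  have "(1 + sum g (insert x F)) powr a = (1 + g x + sum g F) powr a" using insert by (simp add: add.assoc)
  also have "\<dots> \<le> ((1 + g x) + (1 + sum g F)) powr a"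
    by (rule powr_mono2) (use a insert F0 in auto)
  also have "\<dots> \<le> (1 + g x) powr a + (1 + sum g F) powr a"
    by (rule subadd) (use a insert F0 in auto)
  also have "\<dots> \<le> (1 + g x) powr a + (\<Sum>s\<in>F. (1 + g s) powr a)"
    using insert by simp
  finally show ?case using insert by (simp add: add.assoc)
qed

lemma sum_powr_strict:
  fixes g :: "'a \<Rightarrow> real"
  assumes a: "0 < a" "a < 1" and S: "finite S" "2 \<le> card S" "\<forall>s\<in>S. g s \<ge> 0"
  shows "(1 + sum g S) powr a < (\<Sum>s\<in>S. (1 + g s) powr a)"
proof -
  obtain x where x: "x \<in> S" using S by fastforce
  have nS: "\<not> S \<subseteq> {x}" using S card_mono[of "{x}" S] by fastforce
  define F where "F = S - {x}"
  have F: "finite F" "F \<noteq> {}" "x \<notin> F" "S = insert x F"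
    using S x nS by (auto simp: F_def)
  have F0: "sum g F \<ge> 0" using S F by (simp add: sum_nonneg)
  have "(1 + sum g S) powr a = (1 + g x + sum g F) powr a" using F by (simp add: add.assoc)
  also have "\<dots> < ((1 + g x) + (1 + sum g F)) powr a"
    by (rule powr_less_mono2) (use a S F F0 in auto)
  also have "\<dots> \<le> (1 + g x) powr a + (1 + sum g F) powr a"
    by (rule subadd) (use a S F F0 in auto)
  also have "\<dots> \<le> (1 + g x) powr a + (\<Sum>s\<in>F. (1 + g s) powr a)"
    using sum_powr[OF a F(1,2)] S F by simp
  finally show ?thesis using F by simp
qed



lemma extra:
  assumes c: "w \<in> configs (2*n)" and d: "dyck_factor w 0 (2*n)" and mm: "mismatches w \<noteq> 0"
  shows "\<exists>i k. dyck_factor w i k \<and> height w i \<noteq> 0"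
proof -
  note cf = config_facts[OF c]
  have "{i. i + 1 < length w \<and> w ! i = w ! (i + 1)} \<noteq> {}" using mm unfolding mismatches_def by (metis card.empty)
  then obtain p where p: "p + 1 < 2*n" "w!p = w!(p+1)" using cf by auto
  have pl: "p < length w" "Suc p < length w" using p cf by auto
  have wp: "w!p \<in> {1,2}" using cf(1) pl nth_mem by blast
  have s1: "w!(Suc p) = w!p" using p by simp
  from d[unfolded dyck_factor_def] show ?thesis
  proof
    assume pd: "pos_dyck_factor w 0 (2*n)"
    have nn: "height w t \<ge> 0" if "t \<le> 2*n" for t
    proof (cases "t = 0")
      case True thus ?thesis by simp
    next
      case False thus ?thesis using pd that unfolding pos_iff by auto
    qed
    from wp show ?thesis
    proof
      assume a: "w!p = 1"
      have h1: "height w (Suc p) = height w p + 1" using height_step1[OF pl(1) a] .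
      have h2: "height w (Suc (Suc p)) = height w (Suc p) + 1" using height_step1[OF pl(2)] s1 a by simp
      have hp: "height w p \<ge> 0" using nn pl cf by simp
      obtain l where "Suc p < l" "l \<le> length w" "pos_dyck_factor w (Suc p) (l - Suc p)"
        using pos_start[OF cf(1), of "Suc p" "2*n"] h1 h2 hp p cf by auto
      thus ?thesis using h1 hp by (intro exI[of _ "Suc p"] exI[of _ "l - Suc p"]) (auto simp: dyck_factor_def)
    next
      assume "w!p \<in> {2}" hence a: "w!p = 2" by simp
      have h1: "height w (Suc p) = height w p - 1" using height_step2[OF pl(1) a] .
      have h2: "height w (Suc (Suc p)) = height w (Suc p) - 1" using height_step2[OF pl(2)] s1 a by simp
      have "height w (Suc (Suc p)) \<ge> 0" using nn p by simp
      hence hp: "height w p \<ge> 2" using h1 h2 by simp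
      define P where "P m \<longleftrightarrow> m \<le> p \<and> height w m \<le> height w p - 1" for m
      have "P 0" using hp by (simp add: P_def)
      moreover have "\<forall>y. P y \<longrightarrow> id y < Suc p" by (auto simp: P_def)
      ultimately obtain q where q: "P q" "\<forall>y. P y \<longrightarrow> id y \<le> id q"
        using ex_has_greatest_nat[of P 0 id "Suc p"] by blast
      have "q \<noteq> p" using q(1) by (auto simp: P_def)
      hence qp: "q < p" using q(1) by (auto simp: P_def)
      have "\<not> P (Suc q)" using q(2) by auto
      hence hsq: "height w (Suc q) > height w p - 1" using qp by (auto simp: P_def)
      have ql: "q < length w" using qp pl by simp
      have hq1: "height w q \<le> height w p - 1" using q(1) by (simp add: P_def)
      have hq: "height w (Suc q) = height w q + 1" "height w q = height w p - 1"
        using height_step12[OF cf(1) ql] hsq hq1 by auto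
      obtain l where "q < l" "l \<le> length w" "pos_dyck_factor w q (l - q)"
        using pos_start[OF cf(1), of q "Suc p"] hq hp h1 qp pl by auto
      thus ?thesis using hq hp by (intro exI[of _ q] exI[of _ "l - q"]) (auto simp: dyck_factor_def)
    qed
  next
    assume pd: "neg_dyck_factor w 0 (2*n)"
    have nn: "height w t \<le> 0" if "t \<le> 2*n" for t
    proof (cases "t = 0")
      case True thus ?thesis by simp
    next
      case False thus ?thesis using pd that unfolding neg_iff by auto
    qed
    from wp show ?thesis
    proof
      assume a: "w!p = 1"
      have h1: "height w (Suc p) = height w p + 1" using height_step1[OF pl(1) a] .
      have h2: "height w (Suc (Suc p)) = height w (Suc p) + 1" using height_step1[OF pl(2)] s1 a by simp
      have "height w (Suc (Suc p)) \<le> 0" using nn p by simp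
      hence hp: "height w p \<le> -2" using h1 h2 by simp
      define P where "P m \<longleftrightarrow> m \<le> p \<and> height w m \<ge> height w p + 1" for m
      have "P 0" using hp by (simp add: P_def)
      moreover have "\<forall>y. P y \<longrightarrow> id y < Suc p" by (auto simp: P_def)
      ultimately obtain q where q: "P q" "\<forall>y. P y \<longrightarrow> id y \<le> id q"
        using ex_has_greatest_nat[of P 0 id "Suc p"] by blast
      have "q \<noteq> p" using q(1) by (auto simp: P_def)
      hence qp: "q < p" using q(1) by (auto simp: P_def)
      have "\<not> P (Suc q)" using q(2) by auto
      hence hsq: "height w (Suc q) < height w p + 1" using qp by (auto simp: P_def)
      have ql: "q < length w" using qp pl by simp
      have hq1: "height w q \<ge> height w p + 1" using q(1) by (simp add: P_def)
      have hq: "height w (Suc q) = height w q - 1" "height w q = height w p + 1"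
        using height_step12[OF cf(1) ql] hsq hq1 by auto
      obtain l where "q < l" "l \<le> length w" "neg_dyck_factor w q (l - q)"
        using neg_start[OF cf(1), of q "Suc p"] hq hp h1 qp pl by auto
      thus ?thesis using hq hp by (intro exI[of _ q] exI[of _ "l - q"]) (auto simp: dyck_factor_def)
    next
      assume "w!p \<in> {2}" hence a: "w!p = 2" by simp
      have h1: "height w (Suc p) = height w p - 1" using height_step2[OF pl(1) a] .
      have h2: "height w (Suc (Suc p)) = height w (Suc p) - 1" using height_step2[OF pl(2)] s1 a by simp
      have hp: "height w p \<le> 0" using nn pl cf by simp
      obtain l where "Suc p < l" "l \<le> length w" "neg_dyck_factor w (Suc p) (l - Suc p)"
        using neg_start[OF cf(1), of "Suc p" "2*n"] h1 h2 hp p cf by auto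
      thus ?thesis using h1 hp by (intro exI[of _ "Suc p"] exI[of _ "l - Suc p"]) (auto simp: dyck_factor_def)
    qed
  qed
qed


lemma alt:
  assumes c: "w \<in> configs (2*n)" and n1: "1 \<le> n" and mm: "mismatches w = 0"
  shows "DF w = {(0, 2*n)}"
proof -
  note cf = config_facts[OF c]
  have fin: "finite {i. i + 1 < length w \<and> w ! i = w ! (i + 1)}"
    by (rule finite_subset[of _ "{..<length w}"]) auto
  have ne: "w!i \<noteq> w!(Suc i)" if "Suc i < 2*n" for i
    using mm fin that cf unfolding mismatches_def by auto
  have v: "w!i \<in> {1,2}" if "i < 2*n" for i
  proof -
    have "w!i \<in> set w" using cf(2) that by simp
    thus ?thesis using cf(1) by blast
  qed
  define st :: "nat \<Rightarrow> int" where "st x = (if x = 1 then 1 else -1)" for x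
  have hs: "height w (Suc i) = height w i + st (w!i)" if "i < 2*n" for i
    using height_step[of i w] v[OF that] cf that by (auto simp: st_def)
  have w01: "w!0 \<noteq> w!1" using ne[of 0] n1 by simp
  have per: "w!i = w!(i mod 2)" if "i < 2*n" for i
    using that
  proof (induction i)
    case 0 thus ?case by simp
  next
    case (Suc i)
    have IH: "w!i = w!(i mod 2)" using Suc by simp
    have a: "w!(Suc i) \<noteq> w!i" using ne[of i] Suc by auto
    have b: "w!(Suc i) \<in> {1,2}" "w!i \<in> {1,2}" "w!0 \<in> {1,2}" "w!1 \<in> {1,2}"
      using v Suc n1 by auto
    show ?case
    proof (cases "even i")
      case True
      hence "i mod 2 = 0" "Suc i mod 2 = 1" by presburger+
      thus ?thesis using a b IH w01 by auto
    next
      case False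
      hence "i mod 2 = 1" "Suc i mod 2 = 0" by presburger+
      thus ?thesis using a b IH w01 by auto
    qed
  qed
  define d where "d = st (w!0)"
  have d1: "st (w!1) = - d" using w01 v[of 0] v[of 1] n1 by (auto simp: d_def st_def)
  have dd: "d = 1 \<or> d = -1" by (auto simp: d_def st_def)
  have H: "height w i = (if even i then 0 else d)" if "i \<le> 2*n" for i
    using that
  proof (induction i)
    case 0 thus ?case by simp
  next
    case (Suc i)
    have il: "i < 2*n" using Suc by simp
    have e: "height w (Suc i) = height w i + st (w!(i mod 2))" using hs[OF il] per[OF il] by simp
    show ?case
    proof (cases "even i")
      case True
      hence "i mod 2 = 0" by presburger
      thus ?thesis using e Suc True by (simp add: d_def)
    next
      case False
      hence "i mod 2 = 1" by presburger
      thus ?thesis using e Suc False d1 by simp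
    qed
  qed
  have ev: "height w i = 0" if dk: "dyck_factor w i k" for i k
  proof -
    have b: "i + k \<le> 2*n" "1 \<le> k" using dyck_bound[OF dk] cf by auto
    have t1: "(1::nat) \<in> {1..k}" using b by simp
    show ?thesis
    proof (rule ccontr)
      assume nz: "height w i \<noteq> 0"
      hence oi: "odd i" using H[of i] b by (auto split: if_splits)
      have hi: "height w i = d" using H[of i] b oi by simp
      have hi1: "height w (i+1) = 0" using H[of "i+1"] b oi by simp
      from dk show False unfolding dyck_factor_def
      proof
        assume "pos_dyck_factor w i k"
        hence "height w i \<ge> 0" "height w (i+1) \<ge> height w i" using t1 unfolding pos_iff by blast+
        thus False using hi hi1 dd by auto
      next
        assume "neg_dyck_factor w i k"
        hence "height w i \<le> 0" "height w (i+1) \<le> height w i" using t1 unfolding neg_iff by blast+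
        thus False using hi hi1 dd by auto
      qed
    qed
  qed
  have h2n: "height w (0 + 2*n) = height w 0" using cf by simp
  have d0: "dyck_factor w 0 (2*n)"
    using dd
  proof
    assume "d = 1"
    hence "pos_dyck_factor w 0 (2*n)" unfolding pos_iff using h2n n1 cf H by auto
    thus ?thesis by (simp add: dyck_factor_def)
  next
    assume "d = -1"
    hence "neg_dyck_factor w 0 (2*n)" unfolding neg_iff using h2n n1 cf H by auto
    thus ?thesis by (simp add: dyck_factor_def)
  qed
  have m0: "maximal_dyck_factor w 0 (2*n)"
    unfolding maximal_dyck_factor_def
  proof (intro conjI notI)
    show "dyck_factor w 0 (2*n)" by fact
    assume "\<exists>i' k'. dyck_factor w i' k' \<and> height w i' = height w 0 \<and> i' \<le> 0 \<and> 0 + 2 * n \<le> i' + k' \<and> (i', k') \<noteq> (0, 2 * n)"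
    then obtain i' k' where "dyck_factor w i' k'" "i' \<le> 0" "0 + 2 * n \<le> i' + k'" "(i', k') \<noteq> (0, 2 * n)"
      by blast
    thus False using dyck_bound[of w i' k'] cf by auto
  qed
  show ?thesis
  proof
    show "DF w \<subseteq> {(0, 2*n)}"
    proof
      fix x assume x: "x \<in> DF w"
      obtain i k where ik: "x = (i,k)" by (cases x)
      have mk: "maximal_dyck_factor w i k" using x ik by (simp add: DF_def)
      have b: "i + k \<le> length w" "dyck_factor w i k" using DF_bound[of i k w] x ik by auto
      have "(0, 2*n) = (i,k)"
        by (rule max_nc[OF mk d0]) (use ev[OF b(2)] b cf in auto)
      thus "x \<in> {(0, 2*n)}" using ik by simp
    qed
    show "{(0, 2*n)} \<subseteq> DF w" using m0 by (simp add: DF_def)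
  qed
qed



theorem lemma2:
  fixes \<alpha> :: real and n :: nat and w :: "nat list"
  assumes "0 < \<alpha>" and "\<alpha> < 1" and "1 \<le> n" and "w \<in> configs (2 * n)"
  shows "(1 + real n) powr \<alpha> \<le> phi \<alpha> w \<and> phi \<alpha> w \<le> (2 * real n) powr (\<alpha> + 1)
    \<and> (phi \<alpha> w = (1 + real n) powr \<alpha> \<longleftrightarrow> mismatches w = 0)"
proof -
  note a = assms(1,2)
  note cf = config_facts[OF assms(4)]
  define g where "g s = real (cnt 1 (factor w (fst s) (snd s)))" for s
  have g0: "g s \<ge> 0" for s by (simp add: g_def)
  have phi_eq: "phi \<alpha> w = (\<Sum>s\<in>DF w. (1 + g s) powr \<alpha>)"
    unfolding phi_def g_def by (rule sum.cong) auto
  have finDF: "finite (DF w)" by (rule DF_finite)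
  have tb: "(1 + g s) powr \<alpha> \<le> (2 * real n) powr \<alpha>" for s
  proof -
    have "g s \<le> real n" using cnt_factor_le[of 1 w "fst s" "snd s"] cf by (simp add: g_def)
    hence "1 + g s \<le> 2 * real n" using assms(3) by simp
    thus ?thesis using powr_mono2[of \<alpha> "1 + g s" "2*real n"] a g0[of s] by simp
  qed
  have "phi \<alpha> w \<le> real (card (DF w)) * (2 * real n) powr \<alpha>"
    unfolding phi_eq using tb by (rule sum_bounded_above)
  also have "\<dots> \<le> (2 * real n) * (2 * real n) powr \<alpha>"
    using DF_card[of w] cf by (intro mult_right_mono) auto
  also have "\<dots> = (2 * real n) powr (\<alpha> + 1)"
    using assms(3) by (simp add: powr_add)
  finally have upper: "phi \<alpha> w \<le> (2 * real n) powr (\<alpha> + 1)" .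
  define S0 where "S0 = {s \<in> DF w. height w (fst s) = 0}"
  have S0sub: "S0 \<subseteq> DF w" by (auto simp: S0_def)
  have finS0: "finite S0" using finDF S0sub finite_subset by blast
  have cov: "\<exists>s\<in>S0. fst s \<le> p \<and> p < fst s + snd s" if "p < 2*n" for p
    using cover[OF assms(4) that] by (force simp: S0_def)
  have S0ne: "S0 \<noteq> {}" using cov[of 0] assms(3) by auto
  define B where "B s = {p. fst s \<le> p \<and> p < fst s + snd s \<and> w!p = 1}" for s
  have nB: "n = card {p. p < 2*n \<and> w!p = 1}"
    using cnt_take_card[of "2*n" w 1] cf by simp
  also have "\<dots> \<le> card (\<Union>s\<in>S0. B s)"
  proof (rule card_mono)
    show "finite (\<Union>s\<in>S0. B s)" using finS0 by (auto simp: B_def)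
    show "{p. p < 2*n \<and> w!p = 1} \<subseteq> (\<Union>s\<in>S0. B s)"
      using cov by (force simp: B_def)
  qed
  also have "\<dots> \<le> (\<Sum>s\<in>S0. card (B s))" by (rule card_UN_le[OF finS0])
  also have "\<dots> = (\<Sum>s\<in>S0. cnt 1 (factor w (fst s) (snd s)))"
  proof (rule sum.cong)
    fix s assume "s \<in> S0"
    hence "fst s + snd s \<le> length w" using DF_bound[of "fst s" "snd s" w] S0sub by auto
    thus "card (B s) = cnt 1 (factor w (fst s) (snd s))"
      using cnt_factor_card by (simp add: B_def)
  qed simp
  finally have nle: "real n \<le> sum g S0"
    unfolding g_def by (metis of_nat_le_iff of_nat_sum)
  have l1: "(1 + real n) powr \<alpha> \<le> (1 + sum g S0) powr \<alpha>"
    by (rule powr_mono2) (use a nle in auto)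
  have l2: "(1 + sum g S0) powr \<alpha> \<le> (\<Sum>s\<in>S0. (1 + g s) powr \<alpha>)"
    by (rule sum_powr[OF a finS0 S0ne]) (simp add: g0)
  have l3: "(\<Sum>s\<in>S0. (1 + g s) powr \<alpha>) \<le> phi \<alpha> w"
    unfolding phi_eq by (rule sum_mono2[OF finDF S0sub]) simp
  have lower: "(1 + real n) powr \<alpha> \<le> phi \<alpha> w" using l1 l2 l3 by linarith
  have eq: "phi \<alpha> w = (1 + real n) powr \<alpha> \<longleftrightarrow> mismatches w = 0"
  proof
    assume m: "mismatches w = 0"
    have "DF w = {(0, 2*n)}" by (rule alt[OF assms(4) assms(3) m])
    moreover have "factor w 0 (2*n) = w" using cf by (simp add: factor_def)
    ultimately show "phi \<alpha> w = (1 + real n) powr \<alpha>" using cf by (simp add: phi_def)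
  next
    assume e: "phi \<alpha> w = (1 + real n) powr \<alpha>"
    have DFS: "DF w = S0"
    proof (rule ccontr)
      assume "DF w \<noteq> S0"
      then obtain x where x: "x \<in> DF w" "x \<notin> S0" using S0sub by blast
      have "(\<Sum>s\<in>insert x S0. (1 + g s) powr \<alpha>) \<le> phi \<alpha> w"
        unfolding phi_eq by (rule sum_mono2[OF finDF]) (use x S0sub in auto)
      moreover have "(\<Sum>s\<in>insert x S0. (1 + g s) powr \<alpha>) = (1 + g x) powr \<alpha> + (\<Sum>s\<in>S0. (1 + g s) powr \<alpha>)"
        using x finS0 by simp
      moreover have "(1 + g x) powr \<alpha> > 0" using g0[of x] by simp
      ultimately show False using e l1 l2 by linarith
    qed
    have c1: "card S0 = 1"
    proof (rule ccontr)
      assume "card S0 \<noteq> 1"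
      moreover have "card S0 \<noteq> 0" using finS0 S0ne by simp
      ultimately have "2 \<le> card S0" by arith
      hence "(1 + sum g S0) powr \<alpha> < (\<Sum>s\<in>S0. (1 + g s) powr \<alpha>)"
        by (intro sum_powr_strict[OF a finS0]) (auto simp: g0)
      thus False using e l1 l3 by linarith
    qed
    then obtain s0 where s0: "S0 = {s0}" by (rule card_1_singletonE)
    have "fst s0 = 0" using cov[of 0] assms(3) s0 by auto
    moreover have "2*n - 1 < fst s0 + snd s0" using cov[of "2*n-1"] assms(3) s0 by auto
    moreover have "fst s0 + snd s0 \<le> 2*n" using DF_bound[of "fst s0" "snd s0" w] S0sub s0 cf by auto
    ultimately have "s0 = (0, 2*n)" by (cases s0) auto
    hence DF1: "DF w = {(0, 2*n)}" using DFS s0 by simp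
    hence d0: "dyck_factor w 0 (2*n)" using DF_bound[of 0 "2*n" w] by simp
    show "mismatches w = 0"
    proof (rule ccontr)
      assume "mismatches w \<noteq> 0"
      then obtain i k where ik: "dyck_factor w i k" "height w i \<noteq> 0"
        using extra[OF assms(4) d0] by blast
      obtain i' k' where "maximal_dyck_factor w i' k'" "height w i' = height w i"
        using max_ext[OF ik(1)] by blast
      hence "(i',k') \<in> DF w" "height w i' \<noteq> 0" using ik by (auto simp: DF_def)
      thus False using DF1 by simp
    qed
  qed
  show ?thesis using lower upper eq by blast
qed

end
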